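(* Let $d\ge 2$ and $r=r_c=\sqrt{2}$. Consider random sequential adsorption on $S^{d-1}$ with parameter $r$, as defined in the context. Then with probability $1$ the process terminates, and the final (complete) parking consists of exactly $d+1$ points.
   Context: Let $d\ge 2$ and let $S^{d-1}=\{x\in\mathbb{R}^d:|x|=1\}$ be the unit sphere centred at the origin, with $|\cdot|$ the Euclidean norm on $\mathbb{R}^d$. For $r>0$, a parking of radius $r$ on $S^{d-1}$ is a finite set of points $x_1,\dots,x_n\in S^{d-1}$ such that $|x_i-x_j|\ge r$ for all $i\ne j$. Note that $|x_i-x_j|\ge r$ is equivalent to $x_i\cdot x_j\le 1-\tfrac12 r^2$; in particular, for $r=\sqrt2$ it is equivalent to $x_i\cdot x_j\le 0$. Random sequential adsorption with parameter $r$ is the following random process. Start with the empty set. Given the currently parked points $x_1,\dots,x_n$, let $A_n=\{x\in S^{d-1}: |x-x_i|\ge r \text{ for all } i\le n\}$ be the available set ($A_0=S^{d-1}$). If $A_n$ has positive $(d-1)$-dimensional surface measure, draw $x_{n+1}$ from the normalized surface measure restricted to $A_n$ (independently of everything else given the past) and continue; otherwise stop. The final set of parked points is the resulting complete parking. *)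

theory Defs
  imports "HOL-Probability.Probability"
begin

text \<open>State of random sequential adsorption: a pair (n, f) where n is the number of
  parked points and f 0, ..., f (n-1) are the parked points (later values irrelevant).\<close>

definition rsa_space :: "(nat \<times> (nat \<Rightarrow> real ^ 'd)) measure" where
  "rsa_space = count_space UNIV \<Otimes>\<^sub>M (\<Pi>\<^sub>M i\<in>UNIV. (borel :: (real ^ 'd) measure))"

definition avail :: "real \<Rightarrow> nat \<times> (nat \<Rightarrow> real ^ 'd) \<Rightarrow> (real ^ 'd) set" where
  "avail r s = {x \<in> sphere 0 1. \<forall>i < fst s. dist x (snd s i) \<ge> r}"

text \<open>Cone over a subset of the sphere; its Lebesgue measure is proportional to the
  (d-1)-dimensional surface measure of the subset (cone measure = normalized surface measure).\<close>
definition cone1 :: "(real ^ 'd) set \<Rightarrow> (real ^ 'd) set" where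
  "cone1 A = {t *\<^sub>R x | t x. 0 < t \<and> t \<le> 1 \<and> x \<in> A}"

definition sphere_pos :: "(real ^ 'd) set \<Rightarrow> bool" where
  "sphere_pos A \<longleftrightarrow> emeasure lborel (cone1 A) > 0"

text \<open>Normalized surface measure on the sphere restricted to A: push forward of the
  uniform measure on the cone under radial projection.\<close>
definition sphere_uniform :: "(real ^ 'd) set \<Rightarrow> (real ^ 'd) measure" where
  "sphere_uniform A = distr (uniform_measure lborel (cone1 A)) borel (\<lambda>y. (1 / norm y) *\<^sub>R y)"

definition rsa_terminal :: "real \<Rightarrow> nat \<times> (nat \<Rightarrow> real ^ 'd) \<Rightarrow> bool" where
  "rsa_terminal r s \<longleftrightarrow> \<not> sphere_pos (avail r s)"

definition rsa_step :: "real \<Rightarrow> nat \<times> (nat \<Rightarrow> real ^ 'd) \<Rightarrow> (nat \<times> (nat \<Rightarrow> real ^ 'd)) measure" where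
  "rsa_step r s = (if rsa_terminal r s then return rsa_space s
     else distr (sphere_uniform (avail r s)) rsa_space (\<lambda>x. (Suc (fst s), (snd s)(fst s := x))))"

fun rsa_law :: "real \<Rightarrow> nat \<Rightarrow> (nat \<times> (nat \<Rightarrow> real ^ 'd)) measure" where
  "rsa_law r 0 = return rsa_space (0, \<lambda>_. 0)"
| "rsa_law r (Suc n) = bind (rsa_law r n) (rsa_step r)"

end

theory Submission
  imports Defs
begin

lemma unit_dist:
  fixes x y :: "real ^ 'd"
  assumes "norm x = 1" "norm y = 1"
  shows "sqrt 2 \<le> dist x y \<longleftrightarrow> x \<bullet> y \<le> 0"
proof -
  have xx: "x \<bullet> x = 1" "y \<bullet> y = 1" using assms by (metis power2_norm_eq_inner power_one)+
  have "(dist x y)^2 = 2 - 2 * (x \<bullet> y)"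
  proof -
    have "(dist x y)^2 = (x - y) \<bullet> (x - y)" by (simp add: dist_norm power2_norm_eq_inner)
    also have "\<dots> = x \<bullet> x - 2 * (x \<bullet> y) + y \<bullet> y" by (simp add: inner_diff_left inner_diff_right inner_commute)
    finally show ?thesis using xx by simp
  qed
  moreover have "sqrt 2 \<le> dist x y \<longleftrightarrow> 2 \<le> (dist x y)^2"
  proof
    assume "sqrt 2 \<le> dist x y"
    then have "(sqrt 2)^2 \<le> (dist x y)^2" by (intro power_mono) auto
    then show "2 \<le> (dist x y)^2" by simp
  next
    assume "2 \<le> (dist x y)^2"
    then show "sqrt 2 \<le> dist x y" by (intro real_le_lsqrt) auto
  qed
  ultimately show ?thesis by simp
qed

lemma cone1_avail:
  "cone1 (avail r s) = {y. y \<noteq> 0 \<and> norm y \<le> 1 \<and> (\<forall>i<fst s. r \<le> dist ((1/norm y) *\<^sub>R y) (snd s i))}"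
proof (intro set_eqI iffI)
  fix y assume "y \<in> cone1 (avail r s)"
  then obtain t x where "y = t *\<^sub>R x" "0 < t" "t \<le> 1" "x \<in> avail r s" unfolding cone1_def by auto
  then show "y \<in> {y. y \<noteq> 0 \<and> norm y \<le> 1 \<and> (\<forall>i<fst s. r \<le> dist ((1/norm y) *\<^sub>R y) (snd s i))}"
    by (auto simp: avail_def)
next
  fix y assume y: "y \<in> {y. y \<noteq> 0 \<and> norm y \<le> 1 \<and> (\<forall>i<fst s. r \<le> dist ((1/norm y) *\<^sub>R y) (snd s i))}"
  then have "y = norm y *\<^sub>R ((1/norm y) *\<^sub>R y)" by simp
  moreover have "(1/norm y) *\<^sub>R y \<in> avail r s" using y by (auto simp: avail_def)
  ultimately show "y \<in> cone1 (avail r s)" using y unfolding cone1_def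
    by (intro CollectI exI[of _ "norm y"] exI[of _ "(1/norm y) *\<^sub>R y"]) auto
qed

lemma dep_hyperplane:
  fixes x :: "nat \<Rightarrow> real^'d"
  assumes unit: "\<forall>i<k. norm (x i) = 1"
    and obt: "\<forall>i<k. \<forall>j<k. i \<noteq> j \<longrightarrow> x i \<bullet> x j \<le> 0"
    and sum0: "(\<Sum>i<k. c i *\<^sub>R x i) = 0" and j: "j < k" "c j \<noteq> 0"
  shows "\<exists>a. a \<noteq> 0 \<and> (\<forall>y. (\<forall>i<k. y \<bullet> x i \<le> 0) \<longrightarrow> a \<bullet> y = 0)"
proof -
  obtain e where e0: "(\<Sum>i<k. e i *\<^sub>R x i) = 0" and ej: "e j > 0"
  proof (cases "c j > 0")
    case True then show ?thesis using that sum0 by blast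
  next
    case False
    have "(\<Sum>i<k. (- c i) *\<^sub>R x i) = - (\<Sum>i<k. c i *\<^sub>R x i)" by (simp add: sum_negf)
    then show ?thesis using that[of "\<lambda>i. - c i"] sum0 False j by auto
  qed
  define P where "P = {i. i < k \<and> e i > 0}"
  define N where "N = {i. i < k \<and> \<not> e i > 0}"
  have PN: "{..<k} = P \<union> N" "P \<inter> N = {}" "finite P" "finite N" by (auto simp: P_def N_def)
  define u where "u = (\<Sum>i\<in>P. e i *\<^sub>R x i)"
  have "0 = u + (\<Sum>i\<in>N. e i *\<^sub>R x i)"
    using e0 PN unfolding u_def by (simp add: sum.union_disjoint)
  then have "u = - (\<Sum>i\<in>N. e i *\<^sub>R x i)"
    by (metis add.commute eq_neg_iff_add_eq_0)
  then have u2: "u = (\<Sum>i\<in>N. (- e i) *\<^sub>R x i)"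
    by (simp add: sum_negf)
  have "u \<bullet> u = (\<Sum>i\<in>P. e i *\<^sub>R x i) \<bullet> (\<Sum>i\<in>N. (- e i) *\<^sub>R x i)"
    using u2 unfolding u_def by simp
  also have "\<dots> = (\<Sum>i\<in>P. e i * (x i \<bullet> (\<Sum>l\<in>N. (- e l) *\<^sub>R x l)))"
    by (simp add: inner_sum_left)
  also have "\<dots> = (\<Sum>i\<in>P. \<Sum>l\<in>N. (e i * (- e l)) * (x i \<bullet> x l))"
    by (simp add: inner_sum_right sum_distrib_left mult_ac)
  also have "\<dots> \<le> 0"
  proof (intro sum_nonpos)
    fix i l assume "i \<in> P" "l \<in> N"
    then have "e i > 0" "- e l \<ge> 0" "x i \<bullet> x l \<le> 0" using obt by (auto simp: P_def N_def)
    then have "e i * e l \<le> 0" by (intro mult_nonneg_nonpos) auto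
    then have "e i * (- e l) \<ge> 0" by simp
    then show "e i * (- e l) * (x i \<bullet> x l) \<le> 0" using \<open>x i \<bullet> x l \<le> 0\<close> by (rule mult_nonneg_nonpos)
  qed
  finally have "u = 0" by (metis antisym inner_ge_zero inner_eq_zero_iff)
  show ?thesis
  proof (intro exI conjI allI impI)
    show "x j \<noteq> 0" using unit j by auto
    fix y assume y: "\<forall>i<k. y \<bullet> x i \<le> 0"
    have "(\<Sum>i\<in>P. e i * (y \<bullet> x i)) = y \<bullet> u" unfolding u_def by (simp add: inner_sum_right)
    also have "\<dots> = 0" using \<open>u = 0\<close> by simp
    finally have s0: "(\<Sum>i\<in>P. - (e i * (y \<bullet> x i))) = 0" by (simp add: sum_negf)
    have nn: "\<forall>i\<in>P. 0 \<le> - (e i * (y \<bullet> x i))"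
    proof
      fix i assume "i \<in> P"
      then have "e i \<ge> 0" "y \<bullet> x i \<le> 0" using y by (auto simp: P_def)
      then have "e i * (y \<bullet> x i) \<le> 0" by (rule mult_nonneg_nonpos)
      then show "0 \<le> - (e i * (y \<bullet> x i))" by simp
    qed
    have "j \<in> P" using j ej by (simp add: P_def)
    have "\<forall>i\<in>P. - (e i * (y \<bullet> x i)) = 0"
      using sum_nonneg_eq_0_iff[OF PN(3), of "\<lambda>i. - (e i * (y \<bullet> x i))"] s0 nn by blast
    then have "- (e j * (y \<bullet> x j)) = 0" using \<open>j \<in> P\<close> by blast
    then show "x j \<bullet> y = 0" using ej by (simp add: inner_commute)
  qed
qed

lemma hyperplane_null:
  fixes a :: "real^'d"
  assumes "a \<noteq> 0"
  shows "{y. a \<bullet> y = 0} \<in> null_sets lborel"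
proof -
  have "negligible {y. a \<bullet> y = 0}" using negligible_hyperplane[of a 0] assms by simp
  then have "{y. a \<bullet> y = 0} \<in> null_sets lebesgue" by (simp add: negligible_iff_null_sets)
  moreover have "{y. a \<bullet> y = 0} \<in> sets lborel" by (simp add: closed_hyperplane)
  ultimately show ?thesis by (simp add: null_sets_completion_iff)
qed

lemma cone1_avail_sets: "cone1 (avail r s :: (real^'d) set) \<in> sets lborel"
proof -
  have "{y::real^'d. y \<noteq> 0 \<and> norm y \<le> 1 \<and> (\<forall>i<fst s. r \<le> dist ((1/norm y) *\<^sub>R y) (snd s i))} \<in> sets borel"
    by measurable
  then show ?thesis by (simp add: cone1_avail)
qed

lemma terminal_of_dep:
  fixes x :: "nat \<Rightarrow> real^'d"
  assumes unit: "\<forall>i<k. norm (x i) = 1"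
    and obt: "\<forall>i<k. \<forall>j<k. i \<noteq> j \<longrightarrow> sqrt 2 \<le> dist (x i) (x j)"
    and sum0: "(\<Sum>i<k. c i *\<^sub>R x i) = 0" and j: "j < k" "c j \<noteq> 0"
  shows "rsa_terminal (sqrt 2) (k, x)"
proof -
  have obt': "\<forall>i<k. \<forall>j<k. i \<noteq> j \<longrightarrow> x i \<bullet> x j \<le> 0"
  proof (intro allI impI)
    fix i j assume "i < k" "j < k" "i \<noteq> j"
    then show "x i \<bullet> x j \<le> 0" using obt unit unit_dist[of "x i" "x j"] by simp
  qed
  obtain a where a: "a \<noteq> 0" "\<And>y. (\<forall>i<k. y \<bullet> x i \<le> 0) \<Longrightarrow> a \<bullet> y = 0"
    using dep_hyperplane[OF unit obt' sum0 j] by blast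
  have sub: "cone1 (avail (sqrt 2) (k, x)) \<subseteq> {y. a \<bullet> y = 0}"
  proof
    fix y assume "y \<in> cone1 (avail (sqrt 2) (k, x))"
    then have y: "y \<noteq> 0" "\<forall>i<k. sqrt 2 \<le> dist ((1/norm y) *\<^sub>R y) (x i)" by (auto simp: cone1_avail)
    have n1: "norm ((1/norm y) *\<^sub>R y) = 1" using y by simp
    have "\<forall>i<k. ((1/norm y) *\<^sub>R y) \<bullet> x i \<le> 0"
    proof (intro allI impI)
      fix i assume "i < k"
      then show "((1/norm y) *\<^sub>R y) \<bullet> x i \<le> 0" using y(2) unit unit_dist[OF n1, of "x i"] by simp
    qed
    then have "a \<bullet> ((1/norm y) *\<^sub>R y) = 0" by (rule a(2))
    then show "y \<in> {y. a \<bullet> y = 0}" using y by simp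
  qed
  have "cone1 (avail (sqrt 2) (k, x)) \<in> null_sets lborel"
    by (rule null_sets_subset[OF hyperplane_null[OF a(1)] cone1_avail_sets sub])
  then show ?thesis by (simp add: rsa_terminal_def sphere_pos_def null_setsD1)
qed

lemma indep_W:
  fixes x :: "nat \<Rightarrow> real^'d"
  shows "inj_on x {..<k} \<Longrightarrow> independent (x ` {..<k}) \<Longrightarrow> \<exists>v. \<forall>i<k. v \<bullet> x i < 0"
proof (induction k)
  case 0 then show ?case by auto
next
  case (Suc k)
  have im: "x ` {..<Suc k} = insert (x k) (x ` {..<k})" by (auto simp: lessThan_Suc)
  have nin: "x k \<notin> x ` {..<k}"
  proof
    assume "x k \<in> x ` {..<k}"
    then obtain i where "i < k" "x k = x i" by auto
    then show False using Suc.prems(1) unfolding inj_on_def by (metis lessThan_iff less_Suc_eq less_irrefl)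
  qed
  have ind: "independent (x ` {..<k})" and nsp: "x k \<notin> span (x ` {..<k})"
    using Suc.prems(2) unfolding im independent_insert using nin by auto
  have "inj_on x {..<k}" using Suc.prems(1) by (rule inj_on_subset) auto
  then obtain v where v: "\<forall>i<k. v \<bullet> x i < 0" using Suc.IH ind by blast
  obtain y z where yz: "y \<in> span (x ` {..<k})" "\<And>w. w \<in> span (x ` {..<k}) \<Longrightarrow> orthogonal z w" "x k = y + z"
    using orthogonal_subspace_decomp_exists by blast
  have "z \<noteq> 0" using yz nsp by auto
  then have zz: "z \<bullet> z > 0" by simp
  have zxk: "z \<bullet> x k = z \<bullet> z" using yz(2)[OF yz(1)] yz(3) by (simp add: orthogonal_def inner_add_right)
  define t where "t = (\<bar>v \<bullet> x k\<bar> + 1) / (z \<bullet> z)"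
  define w where "w = v - t *\<^sub>R z"
  have "\<forall>i<Suc k. w \<bullet> x i < 0"
  proof (intro allI impI)
    fix i assume i: "i < Suc k"
    show "w \<bullet> x i < 0"
    proof (cases "i < k")
      case True
      then have "x i \<in> span (x ` {..<k})" by (intro span_base) auto
      then have "z \<bullet> x i = 0" using yz(2) by (simp add: orthogonal_def)
      then show ?thesis using v True by (simp add: w_def inner_diff_left)
    next
      case False
      then have "i = k" using i by simp
      have "t * (z \<bullet> z) = \<bar>v \<bullet> x k\<bar> + 1" using zz by (simp add: t_def)
      then have "w \<bullet> x k = v \<bullet> x k - (\<bar>v \<bullet> x k\<bar> + 1)" by (simp add: w_def inner_diff_left zxk)
      moreover have "v \<bullet> x k \<le> \<bar>v \<bullet> x k\<bar>" by simp
      ultimately show ?thesis using \<open>i = k\<close> by simp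
    qed
  qed
  then show ?case by blast
qed

lemma nonterm_of_W:
  fixes x :: "nat \<Rightarrow> real^'d"
  assumes unit: "\<forall>i<k. norm (x i) = 1" and e: "norm e = 1" "\<forall>i<k. e \<bullet> x i < 0"
  shows "\<not> rsa_terminal (sqrt 2) (k, x)"
proof -
  define \<delta> where "\<delta> = Min (insert 1 ((\<lambda>i. - (e \<bullet> x i)) ` {..<k}))"
  have \<delta>pos: "\<delta> > 0" unfolding \<delta>_def using e(2) by (subst Min_gr_iff) auto
  have \<delta>le: "\<delta> \<le> - (e \<bullet> x i)" if "i < k" for i unfolding \<delta>_def using that by (intro Min_le) auto
  define \<epsilon> where "\<epsilon> = min (1/4) (\<delta>/2)"
  have \<epsilon>pos: "\<epsilon> > 0" using \<delta>pos by (simp add: \<epsilon>_def)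
  define c where "c = (1/2) *\<^sub>R e"
  have nc: "norm c = 1/2" using e by (simp add: c_def)
  have sub: "ball c \<epsilon> \<subseteq> cone1 (avail (sqrt 2) (k, x))"
  proof
    fix y assume "y \<in> ball c \<epsilon>"
    then have d: "norm (y - c) < \<epsilon>" by (simp add: dist_norm norm_minus_commute)
    have "norm c - norm y \<le> norm (y - c)" using norm_triangle_ineq2[of c y] by (simp add: norm_minus_commute)
    moreover have d4: "norm (y - c) < 1/4" using d by (simp add: \<epsilon>_def)
    ultimately have ny: "norm y > 0" using nc by linarith
    have "norm y - norm c \<le> norm (y - c)" using norm_triangle_ineq2[of y c] by simp
    then have ny1: "norm y \<le> 1" using d4 nc by linarith
    have neg: "y \<bullet> x i < 0" if i: "i < k" for i
    proof -
      have "y \<bullet> x i = c \<bullet> x i + (y - c) \<bullet> x i" by (simp add: inner_diff_left)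
      moreover have "c \<bullet> x i \<le> - \<delta> / 2" using \<delta>le[OF i] by (simp add: c_def)
      moreover have "(y - c) \<bullet> x i \<le> norm (y - c) * norm (x i)" by (rule norm_cauchy_schwarz)
      moreover have "norm (y - c) * norm (x i) < \<delta>/2" using d unit i by (simp add: \<epsilon>_def)
      ultimately show ?thesis by linarith
    qed
    have "\<forall>i<k. sqrt 2 \<le> dist ((1/norm y) *\<^sub>R y) (x i)"
    proof (intro allI impI)
      fix i assume i: "i < k"
      have n1: "norm ((1/norm y) *\<^sub>R y) = 1" using ny by simp
      have "((1/norm y) *\<^sub>R y) \<bullet> x i = (y \<bullet> x i) / norm y" by simp
      also have "\<dots> < 0" using neg[OF i] ny by (simp add: divide_neg_pos)
      finally have "((1/norm y) *\<^sub>R y) \<bullet> x i \<le> 0" by simp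
      then show "sqrt 2 \<le> dist ((1/norm y) *\<^sub>R y) (x i)" using unit_dist[OF n1, of "x i"] unit i by simp
    qed
    then show "y \<in> cone1 (avail (sqrt 2) (k, x))" using ny ny1 by (auto simp: cone1_avail)
  qed
  have "0 < emeasure lborel (ball c \<epsilon>)" using \<epsilon>pos by (simp add: emeasure_ball)
  also have "\<dots> \<le> emeasure lborel (cone1 (avail (sqrt 2) (k, x)))"
    by (rule emeasure_mono[OF sub cone1_avail_sets])
  finally show ?thesis by (simp add: rsa_terminal_def sphere_pos_def)
qed

lemma nonterm_indep:
  fixes x :: "nat \<Rightarrow> real^'d"
  assumes unit: "\<forall>i<k. norm (x i) = 1"
    and obt: "\<forall>i<k. \<forall>j<k. i \<noteq> j \<longrightarrow> sqrt 2 \<le> dist (x i) (x j)"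
    and nt: "\<not> rsa_terminal (sqrt 2) (k, x)"
  shows "inj_on x {..<k} \<and> independent (x ` {..<k})"
proof
  show inj: "inj_on x {..<k}"
  proof (rule inj_onI)
    fix i j assume "i \<in> {..<k}" "j \<in> {..<k}" "x i = x j"
    moreover have "\<not> sqrt 2 \<le> (0::real)" by simp
    ultimately show "i = j" using obt by fastforce
  qed
  show "independent (x ` {..<k})"
  proof (rule ccontr)
    assume "\<not> independent (x ` {..<k})"
    then obtain u where u: "\<exists>v\<in>x ` {..<k}. u v \<noteq> 0" "(\<Sum>v\<in>x ` {..<k}. u v *\<^sub>R v) = 0"
      using real_vector.dependent_finite[of "x ` {..<k}"] by auto
    obtain j where j: "j < k" "u (x j) \<noteq> 0" using u(1) by auto
    have "(\<Sum>i<k. u (x i) *\<^sub>R x i) = 0" using u(2) by (simp add: sum.reindex[OF inj])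
    then have "rsa_terminal (sqrt 2) (k, x)" using terminal_of_dep[OF unit obt _ j(1), of "\<lambda>i. u (x i)"] j(2) by blast
    then show False using nt by simp
  qed
qed

lemma space_rsa: "space (rsa_space :: (nat \<times> (nat \<Rightarrow> real ^ 'd)) measure) = UNIV"
  by (auto simp: rsa_space_def space_pair_measure space_PiM)

lemma meas_upd:
  "(\<lambda>p. (Suc (fst (fst p)), (snd (fst p))(fst (fst p) := snd p)))
     \<in> (rsa_space \<Otimes>\<^sub>M (borel::(real^'d) measure)) \<rightarrow>\<^sub>M rsa_space"
proof -
  have "(\<lambda>p i. if i = fst (fst p) then snd p else snd (fst p) i)
      \<in> (rsa_space \<Otimes>\<^sub>M (borel::(real^'d) measure)) \<rightarrow>\<^sub>M (\<Pi>\<^sub>M i\<in>UNIV. (borel :: (real ^ 'd) measure))"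
    by (rule measurable_PiM_single') (auto simp: rsa_space_def)
  then have "(\<lambda>p. (snd (fst p))(fst (fst p) := snd p))
      \<in> (rsa_space \<Otimes>\<^sub>M (borel::(real^'d) measure)) \<rightarrow>\<^sub>M (\<Pi>\<^sub>M i\<in>UNIV. (borel :: (real ^ 'd) measure))"
    by (simp add: fun_upd_def)
  then show ?thesis unfolding rsa_space_def[of] by measurable
qed

lemma meas_terminal[measurable]: "Measurable.pred rsa_space (rsa_terminal r :: nat \<times> (nat \<Rightarrow> real ^ 'd) \<Rightarrow> bool)"
proof -
  define Q :: "((nat \<times> (nat \<Rightarrow> real ^ 'd)) \<times> (real ^ 'd)) set" where
    "Q = {p \<in> space (rsa_space \<Otimes>\<^sub>M lborel). snd p \<noteq> 0 \<and> norm (snd p) \<le> 1 \<and>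
          (\<forall>i. i < fst (fst p) \<longrightarrow> r \<le> dist ((1/norm (snd p)) *\<^sub>R snd p) (snd (fst p) i))}"
  have "Q \<in> sets (rsa_space \<Otimes>\<^sub>M lborel)" unfolding Q_def rsa_space_def by measurable
  then have m: "(\<lambda>s. emeasure lborel (Pair s -` Q)) \<in> borel_measurable rsa_space"
    by (rule lborel.measurable_emeasure_Pair)
  have eq: "Pair s -` Q = cone1 (avail r s)" for s
    by (auto simp: Q_def cone1_avail space_pair_measure space_rsa)
  have "rsa_terminal r s \<longleftrightarrow> emeasure lborel (Pair s -` Q) = 0" for s
    by (simp add: eq rsa_terminal_def sphere_pos_def zero_less_iff_neq_zero)
  then show ?thesis using m by (simp add: pred_def) measurable
qed

definition Qc :: "real \<Rightarrow> ((nat \<times> (nat \<Rightarrow> real ^ 'd)) \<times> (real ^ 'd)) set" where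
  "Qc r = {p. snd p \<noteq> 0 \<and> norm (snd p) \<le> 1 \<and>
          (\<forall>i. i < fst (fst p) \<longrightarrow> r \<le> dist ((1/norm (snd p)) *\<^sub>R snd p) (snd (fst p) i))}"

lemma Qc_sets: "Qc r \<in> sets (rsa_space \<Otimes>\<^sub>M lborel)"
proof -
  have E: "{p \<in> space (rsa_space \<Otimes>\<^sub>M lborel). snd p \<noteq> 0 \<and> norm (snd p) \<le> 1 \<and>
          (\<forall>i. i < fst (fst p) \<longrightarrow> r \<le> dist ((1/norm (snd p)) *\<^sub>R snd p) (snd (fst p) (i::nat)))} = Qc r"
    by (auto simp: Qc_def space_pair_measure space_rsa)
  have "{p \<in> space (rsa_space \<Otimes>\<^sub>M lborel). snd p \<noteq> 0 \<and> norm (snd p) \<le> 1 \<and>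
          (\<forall>i. i < fst (fst p) \<longrightarrow> r \<le> dist ((1/norm (snd p)) *\<^sub>R snd p) (snd (fst p) (i::nat)))}
    \<in> sets (rsa_space \<Otimes>\<^sub>M (lborel :: (real^'d) measure))" unfolding rsa_space_def by measurable
  then show ?thesis by (simp only: E)
qed

lemma Qc_Pair: "Pair s -` Qc r = cone1 (avail r s)"
  by (auto simp: Qc_def cone1_avail)

definition hupd :: "(nat \<times> (nat \<Rightarrow> real ^ 'd)) \<times> (real ^ 'd) \<Rightarrow> nat \<times> (nat \<Rightarrow> real ^ 'd)" where
  "hupd p = (Suc (fst (fst p)), (snd (fst p))(fst (fst p) := (1/norm (snd p)) *\<^sub>R snd p))"

lemma hupd_meas: "hupd \<in> (rsa_space \<Otimes>\<^sub>M lborel) \<rightarrow>\<^sub>M rsa_space"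
proof -
  have "(\<lambda>p. (fst p, (1/norm (snd p)) *\<^sub>R snd p)) \<in> (rsa_space \<Otimes>\<^sub>M (lborel :: (real^'d) measure)) \<rightarrow>\<^sub>M (rsa_space \<Otimes>\<^sub>M borel)"
    by measurable
  from measurable_comp[OF this meas_upd] show ?thesis unfolding hupd_def[abs_def] by (simp add: comp_def)
qed

lemma gstep_meas: "(\<lambda>z. (Suc (fst s), (snd s)(fst s := z))) \<in> borel \<rightarrow>\<^sub>M (rsa_space :: (nat \<times> (nat \<Rightarrow> real ^ 'd)) measure)"
proof -
  have "(\<lambda>z. (s, z)) \<in> (borel :: (real^'d) measure) \<rightarrow>\<^sub>M (rsa_space \<Otimes>\<^sub>M borel)"
    by (rule measurable_Pair1') (simp add: space_rsa)
  from measurable_comp[OF this meas_upd] show ?thesis by (simp add: comp_def)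
qed

lemma proj_meas: "(\<lambda>y. (1/norm y) *\<^sub>R y) \<in> uniform_measure lborel C \<rightarrow>\<^sub>M (borel :: (real^'d) measure)"
proof -
  have "(\<lambda>y::real^'d. (1/norm y) *\<^sub>R y) \<in> borel \<rightarrow>\<^sub>M borel" by measurable
  then show ?thesis by (simp add: measurable_cong_sets[OF sets_uniform_measure refl])
qed

lemma cone_finite: "emeasure lborel (cone1 (avail r s :: (real^'d) set)) \<noteq> \<infinity>"
proof -
  have "cone1 (avail r s) \<subseteq> cball (0::real^'d) 1" by (auto simp: cone1_avail)
  then have "bounded (cone1 (avail r s :: (real^'d) set))" by (rule bounded_subset[OF bounded_cball])
  from emeasure_bounded_finite[OF this] show ?thesis by (simp add: less_top)
qed

lemma step_nonterm:
  fixes s :: "nat \<times> (nat \<Rightarrow> real ^ 'd)"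
  assumes nt: "\<not> rsa_terminal r s"
  shows "prob_space (rsa_step r s)" "sets (rsa_step r s) = sets rsa_space"
    "A \<in> sets rsa_space \<Longrightarrow> emeasure (rsa_step r s) A =
       emeasure lborel (Pair s -` (Qc r \<inter> (hupd -` A))) / emeasure lborel (Pair s -` Qc r)"
proof -
  let ?C = "cone1 (avail r s :: (real^'d) set)"
  let ?g = "\<lambda>z. (Suc (fst s), (snd s)(fst s := z))"
  have pos: "emeasure lborel ?C \<noteq> 0" using nt by (simp add: rsa_terminal_def sphere_pos_def zero_less_iff_neq_zero)
  have ps: "prob_space (uniform_measure lborel ?C)"
    by (rule prob_space_uniform_measure[OF pos cone_finite])
  have ps2: "prob_space (sphere_uniform (avail r s))" unfolding sphere_uniform_def
    by (rule prob_space.prob_space_distr[OF ps proj_meas])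
  have st: "rsa_step r s = distr (sphere_uniform (avail r s)) rsa_space ?g"
    using nt by (simp add: rsa_step_def)
  have gm: "?g \<in> sphere_uniform (avail r s) \<rightarrow>\<^sub>M rsa_space"
    using gstep_meas by (simp add: sphere_uniform_def measurable_cong_sets[OF sets_distr refl])
  show "prob_space (rsa_step r s)" unfolding st by (rule prob_space.prob_space_distr[OF ps2 gm])
  show "sets (rsa_step r s) = sets rsa_space" unfolding st by simp
  assume A: "A \<in> sets rsa_space"
  have "emeasure (rsa_step r s) A = emeasure (sphere_uniform (avail r s)) (?g -` A \<inter> space (sphere_uniform (avail r s)))"
    unfolding st by (rule emeasure_distr[OF gm A])
  also have "\<dots> = emeasure (uniform_measure lborel ?C) ((\<lambda>y. (1/norm y) *\<^sub>R y) -` (?g -` A) \<inter> space (uniform_measure lborel ?C))"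
    unfolding sphere_uniform_def
    using measurable_sets[OF gstep_meas A] by (subst emeasure_distr[OF proj_meas]) auto
  also have "\<dots> = emeasure lborel (?C \<inter> ((\<lambda>y. (1/norm y) *\<^sub>R y) -` (?g -` A))) / emeasure lborel ?C"
  proof (subst emeasure_uniform_measure)
    show "?C \<in> sets lborel" by (rule cone1_avail_sets)
    have "(\<lambda>y. (1/norm y) *\<^sub>R y) -` (?g -` A) \<inter> space lborel \<in> sets lborel"
    proof -
      have pm: "(\<lambda>y::real^'d. (1/norm y) *\<^sub>R y) \<in> lborel \<rightarrow>\<^sub>M borel" by simp
      have "?g -` A \<in> sets borel" using measurable_sets[OF gstep_meas A] by simp
      then show ?thesis by (rule measurable_sets[OF pm])
    qed
    then show "(\<lambda>y. (1/norm y) *\<^sub>R y) -` (?g -` A) \<inter> space (uniform_measure lborel ?C) \<in> sets lborel" by simp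
  qed simp
  also have "?C \<inter> ((\<lambda>y. (1/norm y) *\<^sub>R y) -` (?g -` A)) = Pair s -` (Qc r \<inter> (hupd -` A))"
    by (auto simp: Qc_Pair[symmetric] hupd_def)
  finally show "emeasure (rsa_step r s) A =
       emeasure lborel (Pair s -` (Qc r \<inter> (hupd -` A))) / emeasure lborel (Pair s -` Qc r)"
    by (simp add: Qc_Pair)
qed

lemma step_prob: "prob_space (rsa_step r (s :: nat \<times> (nat \<Rightarrow> real ^ 'd)))"
proof (cases "rsa_terminal r s")
  case True then show ?thesis by (simp add: rsa_step_def space_rsa prob_space_return)
next
  case False then show ?thesis by (rule step_nonterm(1))
qed

lemma step_sets: "sets (rsa_step r (s :: nat \<times> (nat \<Rightarrow> real ^ 'd))) = sets rsa_space"
proof (cases "rsa_terminal r s")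
  case True then show ?thesis by (simp add: rsa_step_def)
next
  case False then show ?thesis by (rule step_nonterm(2))
qed

lemma step_emeas:
  assumes A: "A \<in> sets (rsa_space :: (nat \<times> (nat \<Rightarrow> real ^ 'd)) measure)"
  shows "(\<lambda>s. emeasure (rsa_step r s) A) \<in> borel_measurable rsa_space"
proof -
  have QA: "Qc r \<inter> (hupd -` A) \<in> sets (rsa_space \<Otimes>\<^sub>M lborel)"
  proof -
    have "hupd -` A \<inter> space (rsa_space \<Otimes>\<^sub>M lborel) \<in> sets (rsa_space \<Otimes>\<^sub>M lborel)"
      by (rule measurable_sets[OF hupd_meas A])
    moreover have "space (rsa_space \<Otimes>\<^sub>M (lborel :: (real^'d) measure)) = UNIV"
      by (simp add: space_pair_measure space_rsa)
    ultimately have "hupd -` A \<in> sets (rsa_space \<Otimes>\<^sub>M lborel)" by (metis Int_UNIV_right)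
    then show ?thesis using Qc_sets by (rule sets.Int[rotated])
  qed
  have m1: "(\<lambda>s. emeasure lborel (Pair s -` (Qc r \<inter> (hupd -` A)))) \<in> borel_measurable rsa_space"
    by (rule lborel.measurable_emeasure_Pair[OF QA])
  have m2: "(\<lambda>s. emeasure lborel (Pair s -` Qc r)) \<in> borel_measurable rsa_space"
    by (rule lborel.measurable_emeasure_Pair[OF Qc_sets])
  have m3: "indicator A \<in> (borel_measurable rsa_space :: (_ \<Rightarrow> ennreal) set)" using A by measurable
  have "(\<lambda>s. if rsa_terminal r s then indicator A s else
      emeasure lborel (Pair s -` (Qc r \<inter> (hupd -` A))) / emeasure lborel (Pair s -` Qc r)) \<in> borel_measurable rsa_space"
    using meas_terminal[of r] unfolding pred_def
    by (rule measurable_If[OF m3 borel_measurable_divide_ennreal[OF m1 m2]])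
  moreover have "emeasure (rsa_step r s) A = (if rsa_terminal r s then indicator A s else
      emeasure lborel (Pair s -` (Qc r \<inter> (hupd -` A))) / emeasure lborel (Pair s -` Qc r))" for s
  proof (cases "rsa_terminal r s")
    case True then show ?thesis using A by (simp add: rsa_step_def space_rsa)
  next
    case False then show ?thesis using step_nonterm(3)[OF False A] by simp
  qed
  ultimately show ?thesis by simp
qed

lemma step_meas: "rsa_step r \<in> rsa_space \<rightarrow>\<^sub>M prob_algebra (rsa_space :: (nat \<times> (nat \<Rightarrow> real ^ 'd)) measure)"
  by (intro measurable_prob_algebraI measurable_subprob_algebra step_prob step_sets step_emeas
      prob_space_imp_subprob_space)

lemma meas_fst[measurable]: "fst \<in> (rsa_space :: (nat \<times> (nat \<Rightarrow> real ^ 'd)) measure) \<rightarrow>\<^sub>M count_space UNIV"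
  unfolding rsa_space_def by simp

lemma meas_comp[measurable]: "(\<lambda>s. snd s i) \<in> (rsa_space :: (nat \<times> (nat \<Rightarrow> real ^ 'd)) measure) \<rightarrow>\<^sub>M borel"
  unfolding rsa_space_def by measurable

definition good :: "nat \<Rightarrow> nat \<times> (nat \<Rightarrow> real ^ 'd) \<Rightarrow> bool" where
  "good k s \<longleftrightarrow> fst s = k \<and>
     (k \<le> CARD('d) \<longrightarrow> (\<forall>i<k. norm (snd s i) = 1) \<and>
        (\<forall>i<k. \<forall>j<k. i \<noteq> j \<longrightarrow> sqrt 2 \<le> dist (snd s i) (snd s j)) \<and> \<not> rsa_terminal (sqrt 2) s) \<and>
     (CARD('d) < k \<longrightarrow> rsa_terminal (sqrt 2) s)"

lemma good_meas[measurable]: "Measurable.pred rsa_space (good k :: nat \<times> (nat \<Rightarrow> real ^ 'd) \<Rightarrow> bool)"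
  unfolding good_def by measurable

lemma AE_sphere_uniform:
  fixes A :: "(real^'d) set"
  assumes P: "{x. P x} \<in> sets borel" and N: "N \<in> null_sets lborel"
    and H: "\<And>y. y \<in> cone1 A \<Longrightarrow> y \<notin> N \<Longrightarrow> P ((1/norm y) *\<^sub>R y)"
    and C: "cone1 A \<in> sets lborel"
  shows "AE x in sphere_uniform A. P x"
  unfolding sphere_uniform_def
proof (subst AE_distr_iff[OF proj_meas])
  show "{x \<in> space borel. P x} \<in> sets borel" using P by simp
  have "AE y in lborel. y \<in> cone1 A \<longrightarrow> P ((1/norm y) *\<^sub>R y)"
    using AE_not_in[OF N] by eventually_elim (auto intro: H)
  then show "AE y in uniform_measure lborel (cone1 A). P ((1/norm y) *\<^sub>R y)"
    by (rule AE_uniform_measureI[OF C])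
qed

lemma unit_exists: "\<exists>e::real^'d. norm e = 1"
proof -
  obtain b :: "real^'d" where "b \<in> Basis" using nonempty_Basis by blast
  then show ?thesis by (intro exI[of _ b]) simp
qed

lemma good_next:
  fixes s :: "nat \<times> (nat \<Rightarrow> real ^ 'd)"
  assumes g: "good k s" and k: "k \<le> CARD('d)" and z: "z \<in> avail (sqrt 2) s"
    and gen: "k < CARD('d) \<Longrightarrow> z \<notin> span (snd s ` {..<k})"
  shows "good (Suc k) (Suc k, (snd s)(k := z))"
proof -
  have fs: "fst s = k" using g by (simp add: good_def)
  obtain f where s_eq: "s = (k, f)" using fs by (metis prod.collapse)
  define f' where "f' = f(k := z)"
  have f_def: "snd s = f" by (simp add: s_eq)
  have unit: "\<forall>i<k. norm (f i) = 1" and obt: "\<forall>i<k. \<forall>j<k. i \<noteq> j \<longrightarrow> sqrt 2 \<le> dist (f i) (f j)"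
    and nt: "\<not> rsa_terminal (sqrt 2) (k, f)"
    using g k unfolding s_eq by (auto simp: good_def)
  have nz: "norm z = 1" and dz: "\<forall>i<k. sqrt 2 \<le> dist z (f i)"
    using z unfolding s_eq by (auto simp: avail_def)
  have unit': "\<forall>i<Suc k. norm (f' i) = 1" using unit nz by (auto simp: f'_def less_Suc_eq)
  have obt': "\<forall>i<Suc k. \<forall>j<Suc k. i \<noteq> j \<longrightarrow> sqrt 2 \<le> dist (f' i) (f' j)"
  proof (intro allI impI)
    fix i j assume ij: "i < Suc k" "j < Suc k" "i \<noteq> j"
    show "sqrt 2 \<le> dist (f' i) (f' j)"
    proof (cases "i = k")
      case True then show ?thesis using ij dz by (auto simp: f'_def)
    next
      case False
      show ?thesis
      proof (cases "j = k")
        case True then show ?thesis using ij dz False by (auto simp: f'_def dist_commute)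
      next
        case False2: False
        then show ?thesis using ij obt False by (auto simp: f'_def)
      qed
    qed
  qed
  have inj': "inj_on f' {..<Suc k}"
  proof (rule inj_onI)
    fix i j assume "i \<in> {..<Suc k}" "j \<in> {..<Suc k}" "f' i = f' j"
    moreover have "\<not> sqrt 2 \<le> (0::real)" by simp
    ultimately show "i = j" using obt' by fastforce
  qed
  have img: "f' ` {..<Suc k} = insert z (f ` {..<k})"
    by (auto simp: f'_def lessThan_Suc image_iff)
  show ?thesis
  proof (cases "k < CARD('d)")
    case True
    have ind: "inj_on f {..<k} \<and> independent (f ` {..<k})" by (rule nonterm_indep[OF unit obt nt])
    have zn: "z \<notin> span (f ` {..<k})" using gen[OF True] by (simp add: s_eq)
    have "independent (f' ` {..<Suc k})" unfolding img using ind zn by (intro independent_insertI) auto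
    from indep_W[OF inj' this] obtain v where v: "\<forall>i<Suc k. v \<bullet> f' i < 0" by blast
    then have "v \<noteq> 0" by (metis inner_zero_left less_irrefl zero_less_Suc)
    define e where "e = (1 / norm v) *\<^sub>R v"
    have ne: "norm e = 1" using \<open>v \<noteq> 0\<close> by (simp add: e_def)
    have "\<forall>i<Suc k. e \<bullet> f' i < 0" using v \<open>v \<noteq> 0\<close> by (simp add: e_def divide_neg_pos)
    then have "\<not> rsa_terminal (sqrt 2) (Suc k, f')" by (rule nonterm_of_W[OF unit' ne])
    then show ?thesis using True unit' obt' by (simp add: good_def f'_def s_eq)
  next
    case False
    then have kd: "k = CARD('d)" using k by simp
    have fin: "finite (f' ` {..<Suc k})" by simp
    have "card (f' ` {..<Suc k}) = Suc k" using card_image[OF inj'] by simp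
    then have "\<not> independent (f' ` {..<Suc k})" using independent_bound[of "f' ` {..<Suc k}"] kd by auto
    then obtain u where u: "\<exists>v\<in>f' ` {..<Suc k}. u v \<noteq> 0" "(\<Sum>v\<in>f' ` {..<Suc k}. u v *\<^sub>R v) = 0"
      using real_vector.dependent_finite[OF fin] by auto
    obtain j where j: "j < Suc k" "u (f' j) \<noteq> 0" using u(1) by auto
    have "(\<Sum>i<Suc k. u (f' i) *\<^sub>R f' i) = 0" using u(2) by (simp add: sum.reindex[OF inj'])
    then have "rsa_terminal (sqrt 2) (Suc k, f')"
      using terminal_of_dep[OF unit' obt' _ j(1), of "\<lambda>i. u (f' i)"] j(2) by blast
    then show ?thesis using kd by (simp add: good_def f'_def s_eq)
  qed
qed

lemma good_step:
  fixes s :: "nat \<times> (nat \<Rightarrow> real ^ 'd)"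
  assumes g: "good k s"
  shows "AE t in rsa_step (sqrt 2) s. good (if k \<le> CARD('d) then Suc k else k) t"
proof (cases "k \<le> CARD('d)")
  case False
  then have "rsa_terminal (sqrt 2) s" using g by (simp add: good_def)
  then have st: "rsa_step (sqrt 2) s = return rsa_space s" by (simp add: rsa_step_def)
  have ret: "AE t in return rsa_space s. good k t"
    using g by (subst AE_return) (auto simp: space_rsa)
  show ?thesis unfolding st using ret False by simp
next
  case True
  let ?g = "\<lambda>z. (Suc (fst s), (snd s)(fst s := z))"
  have fs: "fst s = k" using g by (simp add: good_def)
  have nt: "\<not> rsa_terminal (sqrt 2) s" using g True by (simp add: good_def)
  have st: "rsa_step (sqrt 2) s = distr (sphere_uniform (avail (sqrt 2) s)) rsa_space ?g"
    using nt by (simp add: rsa_step_def)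
  have gm: "?g \<in> sphere_uniform (avail (sqrt 2) s) \<rightarrow>\<^sub>M rsa_space"
    using gstep_meas by (simp add: sphere_uniform_def measurable_cong_sets[OF sets_distr refl])
  have pm: "Measurable.pred borel (\<lambda>z. good (Suc k) (?g z))"
    by (rule measurable_compose[OF gstep_meas good_meas])
  define N :: "(real^'d) set" where "N = (if k < CARD('d) then span (snd s ` {..<k}) else {})"
  have N: "N \<in> null_sets lborel"
  proof (cases "k < CARD('d)")
    case True
    have "dim (span (snd s ` {..<k})) \<le> card (snd s ` {..<k})" by (simp add: dim_le_card')
    also have "\<dots> \<le> k" using card_image_le[of "{..<k}" "snd s"] by simp
    finally have "dim (span (snd s ` {..<k})) < DIM(real^'d)" using True by simp
    then have "negligible (span (snd s ` {..<k}))" by (rule negligible_lowdim)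
    then have "span (snd s ` {..<k}) \<in> null_sets lebesgue" by (simp add: negligible_iff_null_sets)
    moreover have "span (snd s ` {..<k}) \<in> sets lborel" by (simp add: closed_subspace)
    ultimately show ?thesis using True by (simp add: N_def null_sets_completion_iff)
  qed (simp add: N_def)
  have "AE z in sphere_uniform (avail (sqrt 2) s). good (Suc k) (?g z)"
  proof (rule AE_sphere_uniform[OF _ N _ cone1_avail_sets])
    show "{z. good (Suc k) (?g z)} \<in> sets borel" using pm by (simp add: pred_def)
    fix y assume y: "y \<in> cone1 (avail (sqrt 2) s)" "y \<notin> N"
    let ?z = "(1/norm y) *\<^sub>R y"
    have y0: "y \<noteq> 0" using y by (simp add: cone1_avail)
    have "y \<in> {y. y \<noteq> 0 \<and> norm y \<le> 1 \<and> (\<forall>i<fst s. sqrt 2 \<le> dist ((1/norm y) *\<^sub>R y) (snd s i))}"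
      using y(1) by (simp only: cone1_avail)
    then have za: "?z \<in> avail (sqrt 2) s" by (auto simp: avail_def)
    have gen: "?z \<notin> span (snd s ` {..<k})" if "k < CARD('d)"
    proof
      assume "?z \<in> span (snd s ` {..<k})"
      then have "norm y *\<^sub>R ?z \<in> span (snd s ` {..<k})" by (rule span_scale)
      then have "y \<in> N" using y0 that by (simp add: N_def)
      then show False using y by simp
    qed
    show "good (Suc k) (?g ?z)" using good_next[OF g True za gen] by (simp add: fs)
  qed
  then have "AE t in rsa_step (sqrt 2) s. good (Suc k) t"
    unfolding st using pm good_meas[of "Suc k", unfolded pred_def]
    by (subst AE_distr_iff[OF gm]) (auto simp: space_rsa)
  then show ?thesis using True by simp
qed

lemma good0: "good 0 (0, \<lambda>_. 0 :: real ^ 'd)"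
proof -
  obtain e :: "real^'d" where "norm e = 1" using unit_exists by blast
  then have "\<not> rsa_terminal (sqrt 2) (0, \<lambda>_. 0 :: real ^ 'd)" by (intro nonterm_of_W) auto
  then show ?thesis by (simp add: good_def)
qed

lemma law_props:
  "rsa_law (sqrt 2) n \<in> space (prob_algebra (rsa_space :: (nat \<times> (nat \<Rightarrow> real ^ 'd)) measure)) \<and>
   (AE s in rsa_law (sqrt 2) n. good (min n (Suc CARD('d))) (s :: nat \<times> (nat \<Rightarrow> real ^ 'd)))"
proof (induction n)
  case 0
  have "AE s in return rsa_space (0, \<lambda>_. 0 :: real ^ 'd). good 0 s"
    using good0 by (subst AE_return) (auto simp: space_rsa)
  then show ?case unfolding rsa_law.simps by (auto simp: space_prob_algebra space_rsa intro: prob_space_return)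
next
  case (Suc n)
  let ?M = "rsa_law (sqrt 2) n :: (nat \<times> (nat \<Rightarrow> real ^ 'd)) measure"
  have M: "?M \<in> space (prob_algebra rsa_space)" using Suc.IH by blast
  have sM: "sets ?M = sets rsa_space" using M by (simp add: space_prob_algebra)
  have K: "rsa_step (sqrt 2) \<in> ?M \<rightarrow>\<^sub>M subprob_algebra rsa_space"
    using measurable_prob_algebraD[OF step_meas] by (simp add: measurable_cong_sets[OF sM refl])
  have sp: "rsa_law (sqrt 2) (Suc n) \<in> space (prob_algebra (rsa_space :: (nat \<times> (nat \<Rightarrow> real ^ 'd)) measure))"
    using prob_space_bind'[OF M step_meas] sets_bind'[OF M step_meas] unfolding rsa_law.simps by (simp add: space_prob_algebra)
  have "AE s in ?M. AE t in rsa_step (sqrt 2) s. good (min (Suc n) (Suc CARD('d))) t"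
    using conjunct2[OF Suc.IH]
  proof (eventually_elim)
    case (elim s)
    have "(if min n (Suc CARD('d)) \<le> CARD('d) then Suc (min n (Suc CARD('d))) else min n (Suc CARD('d)))
        = min (Suc n) (Suc CARD('d))" by (simp add: min_def)
    with good_step[OF elim] show ?case by simp
  qed
  then have "AE t in ?M \<bind> rsa_step (sqrt 2). good (min (Suc n) (Suc CARD('d))) t"
    by (subst AE_bind[OF K]) auto
  then show ?case using sp unfolding rsa_law.simps by simp
qed

theorem theorem1:
  assumes "CARD('d) \<ge> 2"
  shows "(\<lambda>n. measure (rsa_law (sqrt 2) n) {s \<in> space rsa_space. rsa_terminal (sqrt 2) (s :: nat \<times> (nat \<Rightarrow> real ^ 'd))})
           \<longlonglongrightarrow> 1
         \<and> (\<forall>n. AE s in rsa_law (sqrt 2) n. rsa_terminal (sqrt 2) (s :: nat \<times> (nat \<Rightarrow> real ^ 'd)) \<longrightarrow> fst s = CARD('d) + 1)"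
proof
  have "eventually (\<lambda>n. measure (rsa_law (sqrt 2) n) {s \<in> space rsa_space. rsa_terminal (sqrt 2) (s :: nat \<times> (nat \<Rightarrow> real ^ 'd))} = 1) sequentially"
    unfolding eventually_sequentially
  proof (intro exI allI impI)
    fix n assume n: "Suc CARD('d) \<le> n"
    let ?M = "rsa_law (sqrt 2) n :: (nat \<times> (nat \<Rightarrow> real ^ 'd)) measure"
    have M: "?M \<in> space (prob_algebra rsa_space)" and ae: "AE s in ?M. good (Suc CARD('d)) s"
      using law_props[of n] n by (auto simp: min_def)
    have ps: "prob_space ?M" and sM: "sets ?M = sets rsa_space" using M by (auto simp: space_prob_algebra)
    have sp: "space ?M = space rsa_space" by (rule sets_eq_imp_space_eq[OF sM])
    have ae2: "AE s in ?M. rsa_terminal (sqrt 2) s" using ae by eventually_elim (simp add: good_def)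
    have ev: "{s \<in> space ?M. rsa_terminal (sqrt 2) s} \<in> sets ?M"
      using meas_terminal[of "sqrt 2"] sM sp by (simp add: pred_def)
    have "measure ?M {s \<in> space ?M. rsa_terminal (sqrt 2) s} = 1"
      using prob_space.prob_Collect_eq_1[OF ps ev] ae2 by simp
    then show "measure ?M {s \<in> space rsa_space. rsa_terminal (sqrt 2) s} = 1" by (simp add: sp)
  qed
  then show "(\<lambda>n. measure (rsa_law (sqrt 2) n) {s \<in> space rsa_space. rsa_terminal (sqrt 2) (s :: nat \<times> (nat \<Rightarrow> real ^ 'd))})
           \<longlonglongrightarrow> 1" by (rule tendsto_eventually)
  show "\<forall>n. AE s in rsa_law (sqrt 2) n. rsa_terminal (sqrt 2) (s :: nat \<times> (nat \<Rightarrow> real ^ 'd)) \<longrightarrow> fst s = CARD('d) + 1"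
  proof
    fix n
    have "AE s in rsa_law (sqrt 2) n. good (min n (Suc CARD('d))) (s :: nat \<times> (nat \<Rightarrow> real ^ 'd))"
      using law_props[of n] by blast
    then show "AE s in rsa_law (sqrt 2) n. rsa_terminal (sqrt 2) (s :: nat \<times> (nat \<Rightarrow> real ^ 'd)) \<longrightarrow> fst s = CARD('d) + 1"
      by eventually_elim (auto simp: good_def min_def split: if_splits)
  qed
qed

end
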